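(* In the setting of the context (with assumptions (A.1)–(A.3)), suppose the PMM generates infinite sequences $\{(u_k,v_k)\}$, $\{(z_k,w_k)\}$, $\{\gamma_k\}$, $\{\rho_k\}$; define $x_k=z_{k-1}+\lambda w_{k-1}+\lambda(Cv_k-d)$, $y_k=x_k-\lambda(w_{k-1}-Mu_k)$, and for $k\ge1$ $$\Gamma_k=\sum_{j=1}^k\rho_j\gamma_j,\quad \bar u_k=\frac1{\Gamma_k}\sum_{j=1}^k\rho_j\gamma_ju_j,\quad \bar v_k=\frac1{\Gamma_k}\sum_{j=1}^k\rho_j\gamma_jv_j,\quad \bar x_k=\frac1{\Gamma_k}\sum_{j=1}^k\rho_j\gamma_jx_j,\quad \bar y_k=\frac1{\Gamma_k}\sum_{j=1}^k\rho_j\gamma_jy_j,$$ $$\bar\epsilon_k^u=\frac1{\Gamma_k}\sum_{j=1}^k\rho_j\gamma_j\langle u_j-\bar u_k,-M^*y_j\rangle,\qquad \bar\epsilon_k^v=\frac1{\Gamma_k}\sum_{j=1}^k\rho_j\gamma_j\langle v_j-\bar v_k,-C^*x_j\rangle.$$ Let $d_0$ be the distance from $(z_0,w_0)$ to $S_e(\partial h_1,\partial h_2)$, $\tau=\min\{\lambda,1/\lambda\}$ and $\vartheta=\frac{1}{\tau^2(1-\bar\rho)^2}+1$. Then for every integer $k\ge1$, $$0\in\partial_{\bar\epsilon_k^v}g(\bar v_k)+C^*\bar x_k,\qquad 0\in\partial_{\bar\epsilon_k^u}f(\bar u_k)+M^*\bar y_k,$$ $$\|M\bar u_k+C\bar v_k-d\|\le\frac{4d_0}{k(1-\bar\rho)\tau},\qquad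 \|\bar x_k-\bar y_k\|\le\frac{4d_0}{k(1-\bar\rho)\tau},\qquad \bar\epsilon_k^u+\bar\epsilon_k^v\le\frac{8d_0^2\vartheta}{k(1-\bar\rho)\tau}.$$
   Context: Let $f:\mathbb{R}^{m_1}\to(-\infty,\infty]$, $g:\mathbb{R}^{m_2}\to(-\infty,\infty]$ be proper closed convex, $M:\mathbb{R}^{m_1}\to\mathbb{R}^n$, $C:\mathbb{R}^{m_2}\to\mathbb{R}^n$ linear, $d\in\mathbb{R}^n$; consider $\min\{f(u)+g(v):Mu+Cv=d\}$ with Lagrangian $L(u,v,z)=f(u)+g(v)+\langle Mu+Cv-d,z\rangle$. A saddle point is $(u^*,v^*,z^* )$ with $L(u^*,v^*,z^* )$ finite and $\min_{(u,v)}L(u,v,z^* )=L(u^*,v^*,z^* )=\max_zL(u^*,v^*,z)$. Let $h_1(z)=f^*(-M^*z)$, $h_2(z)=g^*(-C^*z)+\langle d,z\rangle$ ($^*$ on functions = Fenchel conjugate, on operators = adjoint), and $S_e(\partial h_1,\partial h_2)=\{(z,w)\in\mathbb{R}^n\times\mathbb{R}^n:-w\in\partial h_1(z),\ w\in\partial h_2(z)\}$ (a closed convex set). Standing assumptions: (A.1) $L$ has a saddle point; (A.2) $\mathrm{ri}(\mathrm{dom} f^* )\cap\mathrm{range}(M^* )\ne\emptyset$; (A.3) $\mathrm{ri}(\mathrm{dom} g^* )\cap\mathrm{range}(C^* )\ne\emptyset$. For $\epsilon\ge0$, $\partial_\epsilon \theta(x)=\{s:\theta(x')\ge\theta(x)+\langle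 s,x'-x\rangle-\epsilon\ \forall x'\}$. PMM: given $(z_0,w_0)\in\mathbb{R}^n\times\mathbb{R}^n$, $\lambda>0$, $\bar\rho\in[0,1)$, for $k=1,2,\dots$: (1) let $v_k$ be a minimizer of $g(v)+\langle z_{k-1}+\lambda w_{k-1},Cv-d\rangle+\frac\lambda2\|Cv-d\|^2$ and $u_k$ a minimizer of $f(u)+\langle z_{k-1}+\lambda(Cv_k-d),Mu\rangle+\frac\lambda2\|Mu\|^2$; (2) if $\|Mu_k+Cv_k-d\|+\|Mu_k-w_{k-1}\|=0$ stop; otherwise set $\gamma_k=\dfrac{\lambda\|Cv_k-d+w_{k-1}\|^2+\lambda\langle d-Cv_k-Mu_k,w_{k-1}-Mu_k\rangle}{\|Mu_k+Cv_k-d\|^2+\lambda^2\|Mu_k-w_{k-1}\|^2}$; (3) choose $\rho_k\in[1-\bar\rho,1+\bar\rho]$ and set $z_k=z_{k-1}+\rho_k\gamma_k(Mu_k+Cv_k-d)$, $w_k=w_{k-1}-\rho_k\gamma_k\lambda(w_{k-1}-Mu_k)$. *)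

theory Defs
  imports "HOL-Analysis.Analysis" "HOL-Library.Extended_Real"
begin

definition proper_fun :: "('a \<Rightarrow> ereal) \<Rightarrow> bool" where
  "proper_fun f \<longleftrightarrow> (\<forall>x. f x \<noteq> -\<infinity>) \<and> (\<exists>x. f x \<noteq> \<infinity>)"

definition epigraph_e :: "('a \<Rightarrow> ereal) \<Rightarrow> ('a \<times> real) set" where
  "epigraph_e f = {(x, t). f x \<le> ereal t}"

definition convex_fun :: "('a::real_vector \<Rightarrow> ereal) \<Rightarrow> bool" where
  "convex_fun f \<longleftrightarrow> convex (epigraph_e f)"

definition closed_fun :: "('a::real_normed_vector \<Rightarrow> ereal) \<Rightarrow> bool" where
  "closed_fun f \<longleftrightarrow> closed (epigraph_e f)"

definition proper_closed_convex :: "('a::real_normed_vector \<Rightarrow> ereal) \<Rightarrow> bool" where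
  "proper_closed_convex f \<longleftrightarrow> proper_fun f \<and> closed_fun f \<and> convex_fun f"

definition fconj :: "('a::real_inner \<Rightarrow> ereal) \<Rightarrow> 'a \<Rightarrow> ereal" where
  "fconj f s = (SUP x. ereal (s \<bullet> x) - f x)"

definition edom :: "('a \<Rightarrow> ereal) \<Rightarrow> 'a set" where
  "edom f = {x. f x < \<infinity>}"

definition esubdiff :: "real \<Rightarrow> ('a::real_inner \<Rightarrow> ereal) \<Rightarrow> 'a \<Rightarrow> 'a set" where
  "esubdiff e \<theta> x = {s. \<forall>x'. \<theta> x' \<ge> \<theta> x + ereal (s \<bullet> (x' - x) - e)}"

definition subdiff :: "('a::real_inner \<Rightarrow> ereal) \<Rightarrow> 'a \<Rightarrow> 'a set" where
  "subdiff \<theta> x = esubdiff 0 \<theta> x"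

definition lagr :: "('a \<Rightarrow> ereal) \<Rightarrow> ('b \<Rightarrow> ereal) \<Rightarrow> ('a \<Rightarrow> 'c) \<Rightarrow> ('b \<Rightarrow> 'c) \<Rightarrow> 'c::real_inner
     \<Rightarrow> 'a \<Rightarrow> 'b \<Rightarrow> 'c \<Rightarrow> ereal" where
  "lagr f g M C d u v z = f u + g v + ereal ((M u + C v - d) \<bullet> z)"

definition saddle_point where
  "saddle_point f g M C d u0 v0 z0 \<longleftrightarrow>
     \<bar>lagr f g M C d u0 v0 z0\<bar> \<noteq> \<infinity> \<and>
     (\<forall>u v. lagr f g M C d u0 v0 z0 \<le> lagr f g M C d u v z0) \<and>
     (\<forall>z. lagr f g M C d u0 v0 z \<le> lagr f g M C d u0 v0 z0)"

definition h1 :: "('a::real_inner \<Rightarrow> ereal) \<Rightarrow> ('a \<Rightarrow> 'c::real_inner) \<Rightarrow> 'c \<Rightarrow> ereal" where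
  "h1 f M z = fconj f (- adjoint M z)"

definition h2 :: "('b::real_inner \<Rightarrow> ereal) \<Rightarrow> ('b \<Rightarrow> 'c::real_inner) \<Rightarrow> 'c \<Rightarrow> 'c \<Rightarrow> ereal" where
  "h2 g C d z = fconj g (- adjoint C z) + ereal (d \<bullet> z)"

definition Se :: "('c::real_inner \<Rightarrow> ereal) \<Rightarrow> ('c \<Rightarrow> ereal) \<Rightarrow> ('c \<times> 'c) set" where
  "Se \<phi> \<psi> = {(z, w). - w \<in> subdiff \<phi> z \<and> w \<in> subdiff \<psi> z}"

text \<open>Sequences generated by the PMM (infinite run: the stopping test never fires).\<close>
definition pmm_run where
  "pmm_run f g M C d lam rhobar u v z w gam rho \<longleftrightarrow>
    lam > 0 \<and> 0 \<le> rhobar \<and> rhobar < 1 \<and>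
    (\<forall>k\<ge>1.
      (\<forall>v'. g (v k) + ereal ((z (k-1) + lam *\<^sub>R w (k-1)) \<bullet> (C (v k) - d)) + ereal (lam / 2 * (norm (C (v k) - d))\<^sup>2)
          \<le> g v' + ereal ((z (k-1) + lam *\<^sub>R w (k-1)) \<bullet> (C v' - d)) + ereal (lam / 2 * (norm (C v' - d))\<^sup>2)) \<and>
      (\<forall>u'. f (u k) + ereal ((z (k-1) + lam *\<^sub>R (C (v k) - d)) \<bullet> M (u k)) + ereal (lam / 2 * (norm (M (u k)))\<^sup>2)
          \<le> f u' + ereal ((z (k-1) + lam *\<^sub>R (C (v k) - d)) \<bullet> M u') + ereal (lam / 2 * (norm (M u'))\<^sup>2)) \<and>
      norm (M (u k) + C (v k) - d) + norm (M (u k) - w (k-1)) \<noteq> 0 \<and>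
      gam k = (lam * (norm (C (v k) - d + w (k-1)))\<^sup>2
               + lam * ((d - C (v k) - M (u k)) \<bullet> (w (k-1) - M (u k))))
             / ((norm (M (u k) + C (v k) - d))\<^sup>2 + lam\<^sup>2 * (norm (M (u k) - w (k-1)))\<^sup>2) \<and>
      1 - rhobar \<le> rho k \<and> rho k \<le> 1 + rhobar \<and>
      z k = z (k-1) + (rho k * gam k) *\<^sub>R (M (u k) + C (v k) - d) \<and>
      w k = w (k-1) - (rho k * gam k * lam) *\<^sub>R (w (k-1) - M (u k)))"

end

theory Submission
  imports Defs
begin


lemma step_identity:
  fixes z w m n qz qw :: "'c::real_inner" and lam al :: real
  defines "x \<equiv> z + lam *\<^sub>R w + lam *\<^sub>R n"
  defines "y \<equiv> x - lam *\<^sub>R (w - m)"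
  shows "(inner (qz - z) (qz - z) + inner (qw - w) (qw - w))
         - (inner (qz - (z + al *\<^sub>R (m + n))) (qz - (z + al *\<^sub>R (m + n)))
            + inner (qw - (w - (al * lam) *\<^sub>R (w - m))) (qw - (w - (al * lam) *\<^sub>R (w - m))))
       - 2 * al * (inner (qz - y) (m - qw) + inner (qz - x) (qw + n))
       = 2 * al * lam * (inner (n + w) (n + w) + inner (- n - m) (w - m))
         - al^2 * (inner (m + n) (m + n) + lam^2 * inner (m - w) (m - w))"
  unfolding x_def y_def
  by (simp add: inner_simps algebra_simps inner_commute power2_eq_square)

lemma lim_small:
  fixes X Y K :: real
  assumes "K \<ge> 0" "\<And>t. 0 < t \<Longrightarrow> t < 1 \<Longrightarrow> Y - t * K \<le> X"
  shows "Y \<le> X"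
proof (rule ccontr)
  assume "\<not> Y \<le> X"
  hence d: "Y - X > 0" by simp
  define t where "t = min (1/2) ((Y - X) / (2 * (K + 1)))"
  have t0: "0 < t" "t < 1" using d assms(1) by (auto simp: t_def)
  have "t * K \<le> ((Y - X) / (2 * (K + 1))) * K"
    using assms(1) by (intro mult_right_mono) (auto simp: t_def)
  also have "\<dots> < Y - X"
  proof -
    have "((Y - X) / (2 * (K + 1))) * K = (Y - X) * (K / (2 * (K + 1)))" by simp
    also have "\<dots> < (Y - X) * 1"
      using d assms(1) by (intro mult_strict_left_mono) (auto simp: field_simps)
    finally show ?thesis by simp
  qed
  finally have "Y - t * K > X" by simp
  with assms(2)[OF t0] show False by simp
qed

lemma epi_convex_comb:
  assumes "convex_fun \<theta>" "\<theta> x \<le> ereal T" "\<theta> x' \<le> ereal T'" "0 \<le> t" "t \<le> 1"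
  shows "\<theta> ((1 - t) *\<^sub>R x + t *\<^sub>R x') \<le> ereal ((1 - t) * T + t * T')"
proof -
  have "(x, T) \<in> epigraph_e \<theta>" "(x', T') \<in> epigraph_e \<theta>" using assms by (auto simp: epigraph_e_def)
  moreover have "convex (epigraph_e \<theta>)" using assms(1) by (simp add: convex_fun_def)
  ultimately have "(1 - t) *\<^sub>R (x, T) + t *\<^sub>R (x', T') \<in> epigraph_e \<theta>"
    using assms(4,5) by (intro convexD) auto
  thus ?thesis by (simp add: epigraph_e_def)
qed

lemma opt_cond:
  fixes \<theta> :: "'a::euclidean_space \<Rightarrow> ereal" and A :: "'a \<Rightarrow> 'c::euclidean_space"
  assumes conv: "convex_fun \<theta>" and pr: "proper_fun \<theta>" and lin: "linear A" and c: "c \<ge> 0"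
    and mn: "\<And>x'. \<theta> x + ereal (a \<bullet> (A x - e)) + ereal (c * (norm (A x - e))\<^sup>2)
              \<le> \<theta> x' + ereal (a \<bullet> (A x' - e)) + ereal (c * (norm (A x' - e))\<^sup>2)"
  shows "\<bar>\<theta> x\<bar> \<noteq> \<infinity>"
    and "\<And>x'. \<theta> x' \<ge> \<theta> x + ereal ((- adjoint A (a + (2 * c) *\<^sub>R (A x - e))) \<bullet> (x' - x) - 0)"
proof -
  obtain x0 where x0: "\<theta> x0 \<noteq> \<infinity>" using pr unfolding proper_fun_def by auto
  have nm: "\<And>y. \<theta> y \<noteq> -\<infinity>" using pr unfolding proper_fun_def by auto
  have "\<theta> x \<noteq> \<infinity>"
  proof
    assume "\<theta> x = \<infinity>"
    with mn[of x0] x0 nm[of x0] show False by auto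
  qed
  then obtain T where T: "\<theta> x = ereal T" using nm[of x] by (cases "\<theta> x") auto
  thus "\<bar>\<theta> x\<bar> \<noteq> \<infinity>" by simp
  fix x'
  show "\<theta> x' \<ge> \<theta> x + ereal ((- adjoint A (a + (2 * c) *\<^sub>R (A x - e))) \<bullet> (x' - x) - 0)"
  proof (cases "\<theta> x' = \<infinity>")
    case True thus ?thesis by simp
  next
    case False
    then obtain T' where T': "\<theta> x' = ereal T'" using nm[of x'] by (cases "\<theta> x'") auto
    define h where "h = x' - x"
    define r where "r = A x - e"
    have key: "- ((a + (2*c) *\<^sub>R r) \<bullet> A h) - t * (c * (norm (A h))\<^sup>2) \<le> T' - T"
      if t: "0 < t" "t < 1" for t
    proof -
      have e1: "(1 - t) *\<^sub>R x + t *\<^sub>R x' = x + t *\<^sub>R h" by (simp add: h_def algebra_simps)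
      have cv: "\<theta> (x + t *\<^sub>R h) \<le> ereal ((1 - t) * T + t * T')"
        using epi_convex_comb[OF conv, of x T x' T' t] T T' t e1 by auto
      have Ae: "A (x + t *\<^sub>R h) - e = r + t *\<^sub>R A h"
        by (simp add: r_def linear_add[OF lin] linear_scale[OF lin])
      have m1: "\<theta> (x + t *\<^sub>R h) + ereal (a \<bullet> (A (x + t *\<^sub>R h) - e)) + ereal (c * (norm (A (x + t *\<^sub>R h) - e))\<^sup>2)
           \<le> ereal ((1 - t) * T + t * T') + ereal (a \<bullet> (A (x + t *\<^sub>R h) - e)) + ereal (c * (norm (A (x + t *\<^sub>R h) - e))\<^sup>2)"
        using cv by (intro add_right_mono)
      have "ereal T + ereal (a \<bullet> (A x - e)) + ereal (c * (norm (A x - e))\<^sup>2)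
            \<le> ereal ((1 - t) * T + t * T') + ereal (a \<bullet> (A (x + t *\<^sub>R h) - e)) + ereal (c * (norm (A (x + t *\<^sub>R h) - e))\<^sup>2)"
        using order_trans[OF mn[of "x + t *\<^sub>R h"] m1] T by simp
      hence ri: "T + a \<bullet> r + c * (norm r)\<^sup>2 \<le> (1 - t) * T + t * T' + a \<bullet> (r + t *\<^sub>R A h) + c * (norm (r + t *\<^sub>R A h))\<^sup>2"
        unfolding Ae by (simp add: r_def)
      have "(norm (r + t *\<^sub>R A h))\<^sup>2 = (norm r)\<^sup>2 + 2 * t * (r \<bullet> A h) + t^2 * (norm (A h))\<^sup>2"
        unfolding power2_norm_eq_inner by (simp add: inner_simps inner_commute algebra_simps power2_eq_square)
      with ri have "t * (- ((a + (2*c) *\<^sub>R r) \<bullet> A h) - t * (c * (norm (A h))\<^sup>2)) \<le> t * (T' - T)"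
        by (simp add: inner_simps algebra_simps power2_eq_square)
      thus ?thesis using t by simp
    qed
    have "- ((a + (2*c) *\<^sub>R r) \<bullet> A h) \<le> T' - T"
      by (rule lim_small[of "c * (norm (A h))\<^sup>2"]) (use c key in auto)
    moreover have "(adjoint A (a + (2*c) *\<^sub>R r)) \<bullet> h = A h \<bullet> (a + (2*c) *\<^sub>R r)"
      using adjoint_works[OF lin] by (simp add: inner_commute)
    ultimately show ?thesis using T T' by (simp add: h_def r_def inner_commute)
  qed
qed


lemma conj_lower: "fconj \<theta> s \<ge> ereal (s \<bullet> x) - \<theta> x"
  unfolding fconj_def by (rule SUP_upper) simp

lemma conj_upper:
  assumes T: "\<theta> x = ereal T" and sg: "\<And>x'. \<theta> x' \<ge> \<theta> x + ereal (s \<bullet> (x' - x) - 0)"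
  shows "fconj \<theta> s \<le> ereal (s \<bullet> x - T)"
  unfolding fconj_def
proof (rule SUP_least)
  fix x' :: 'a
  have h: "\<theta> x' \<ge> ereal (T + s \<bullet> (x' - x))" using sg[of x'] T by simp
  show "ereal (s \<bullet> x') - \<theta> x' \<le> ereal (s \<bullet> x - T)"
  proof (cases "\<theta> x'")
    case (real r)
    with h have "T + s \<bullet> (x' - x) \<le> r" by simp
    with real show ?thesis by (simp add: inner_diff_right)
  qed (use h in auto)
qed

lemma ereal_shift:
  fixes a b :: ereal
  assumes "a + ereal p \<ge> b + ereal q"
  shows "a \<ge> b + ereal (q - p)"
  using assms by (cases a; cases b) auto

lemma mono_piece:
  fixes \<theta> :: "'a::euclidean_space \<Rightarrow> ereal" and A :: "'a \<Rightarrow> 'c::euclidean_space"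
  assumes lin: "linear A" and T: "\<theta> x = ereal T"
    and sg: "\<And>x'. \<theta> x' \<ge> \<theta> x + ereal ((- adjoint A y) \<bullet> (x' - x) - 0)"
    and h: "fconj \<theta> (- adjoint A y) \<ge> fconj \<theta> (- adjoint A zs) + ereal (ws \<bullet> (y - zs) - 0)"
  shows "(zs - y) \<bullet> (A x + ws) \<ge> 0"
proof -
  have u: "fconj \<theta> (- adjoint A y) \<le> ereal ((- adjoint A y) \<bullet> x - T)"
    by (rule conj_upper[OF T sg])
  have l: "fconj \<theta> (- adjoint A zs) \<ge> ereal ((- adjoint A zs) \<bullet> x) - ereal T"
    using conj_lower[where \<theta>=\<theta> and s="- adjoint A zs" and x=x] T by simp
  have "ereal ((- adjoint A zs) \<bullet> x - T) + ereal (ws \<bullet> (y - zs) - 0) \<le> ereal ((- adjoint A y) \<bullet> x - T)"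
    using order_trans[OF add_right_mono[OF l] order_trans[OF h u]] by simp
  hence "(- adjoint A zs) \<bullet> x - T + ws \<bullet> (y - zs) \<le> (- adjoint A y) \<bullet> x - T" by simp
  moreover have "x \<bullet> adjoint A zs = A x \<bullet> zs" "x \<bullet> adjoint A y = A x \<bullet> y"
    using adjoint_works[OF lin] by auto
  ultimately show ?thesis by (simp add: inner_simps inner_commute algebra_simps)
qed

lemma conj_sub:
  fixes \<theta> :: "'a::euclidean_space \<Rightarrow> ereal" and A :: "'a \<Rightarrow> 'c::euclidean_space"
  assumes lin: "linear A" and T: "\<theta> x = ereal T"
    and sg: "\<And>x'. \<theta> x' \<ge> \<theta> x + ereal ((- adjoint A zs) \<bullet> (x' - x) - 0)"
  shows "fconj \<theta> (- adjoint A z') \<ge> fconj \<theta> (- adjoint A zs) + ereal ((- A x) \<bullet> (z' - zs) - 0)"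
proof -
  have u: "fconj \<theta> (- adjoint A zs) \<le> ereal ((- adjoint A zs) \<bullet> x - T)"
    by (rule conj_upper[OF T sg])
  have l: "fconj \<theta> (- adjoint A z') \<ge> ereal ((- adjoint A z') \<bullet> x) - ereal T"
    using conj_lower[where \<theta>=\<theta> and s="- adjoint A z'" and x=x] T by simp
  have "x \<bullet> adjoint A zs = A x \<bullet> zs" "x \<bullet> adjoint A z' = A x \<bullet> z'"
    using adjoint_works[OF lin] by auto
  hence eq: "(- adjoint A zs) \<bullet> x - T + (- A x) \<bullet> (z' - zs) - 0 = (- adjoint A z') \<bullet> x - T"
    by (simp add: inner_simps inner_commute algebra_simps)
  have "fconj \<theta> (- adjoint A zs) + ereal ((- A x) \<bullet> (z' - zs) - 0)
        \<le> ereal ((- adjoint A zs) \<bullet> x - T) + ereal ((- A x) \<bullet> (z' - zs) - 0)"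
    using u by (rule add_right_mono)
  also have "\<dots> = ereal ((- adjoint A z') \<bullet> x - T)" using eq by simp
  also have "\<dots> \<le> fconj \<theta> (- adjoint A z')" using l by simp
  finally show ?thesis .
qed


lemma saddle_Se:
  fixes f :: "'a::euclidean_space \<Rightarrow> ereal" and g :: "'b::euclidean_space \<Rightarrow> ereal"
    and M :: "'a \<Rightarrow> 'c::euclidean_space" and C :: "'b \<Rightarrow> 'c"
  assumes pf: "proper_fun f" and pg: "proper_fun g" and lM: "linear M" and lC: "linear C"
    and sp: "saddle_point f g M C d us vs zs"
  shows "(zs, M us) \<in> Se (h1 f M) (h2 g C d)"
proof -
  have fn: "\<And>u. f u \<noteq> -\<infinity>" using pf by (simp add: proper_fun_def)
  have gn: "\<And>v. g v \<noteq> -\<infinity>" using pg by (simp add: proper_fun_def)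
  have fin: "\<bar>f us + g vs + ereal ((M us + C vs - d) \<bullet> zs)\<bar> \<noteq> \<infinity>"
    using sp by (simp add: saddle_point_def lagr_def)
  obtain F where F: "f us = ereal F" using fin fn[of us] gn[of vs]
    by (cases "f us"; cases "g vs") auto
  obtain G where G: "g vs = ereal G" using fin fn[of us] gn[of vs]
    by (cases "f us"; cases "g vs") auto
  define R where "R = M us + C vs - d"
  have "lagr f g M C d us vs (zs + R) \<le> lagr f g M C d us vs zs"
    using sp by (simp add: saddle_point_def)
  hence "R \<bullet> (zs + R) \<le> R \<bullet> zs" using F G by (simp add: lagr_def R_def)
  hence "R \<bullet> R \<le> 0" by (simp add: inner_simps)
  hence R0: "R = 0" by (metis inner_ge_zero order.antisym inner_eq_zero_iff)
  have dC: "d - C vs = M us" using R0 by (simp add: R_def algebra_simps)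
  have sf: "f u \<ge> f us + ereal ((- adjoint M zs) \<bullet> (u - us) - 0)" for u
  proof -
    have "lagr f g M C d us vs zs \<le> lagr f g M C d u vs zs"
      using sp by (simp add: saddle_point_def)
    hence h: "ereal (F + G) \<le> f u + ereal G + ereal ((M u + C vs - d) \<bullet> zs)"
      using F G R0 by (simp add: lagr_def R_def)
    have e: "(M u + C vs - d) \<bullet> zs = (u - us) \<bullet> adjoint M zs"
      using adjoint_works[OF lM, of "u - us" zs] dC linear_diff[OF lM]
      by (simp add: algebra_simps)
    show ?thesis
    proof (cases "f u")
      case (real r) with h e F show ?thesis by (simp add: inner_simps inner_commute)
    qed (use fn in auto)
  qed
  have sg: "g v \<ge> g vs + ereal ((- adjoint C zs) \<bullet> (v - vs) - 0)" for v
  proof -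
    have "lagr f g M C d us vs zs \<le> lagr f g M C d us v zs"
      using sp by (simp add: saddle_point_def)
    hence h: "ereal (F + G) \<le> ereal F + g v + ereal ((M us + C v - d) \<bullet> zs)"
      using F G R0 by (simp add: lagr_def R_def)
    have e: "(M us + C v - d) \<bullet> zs = (v - vs) \<bullet> adjoint C zs"
      using adjoint_works[OF lC, of "v - vs" zs] dC linear_diff[OF lC]
      by (simp add: algebra_simps)
    show ?thesis
    proof (cases "g v")
      case (real r) with h e G show ?thesis by (simp add: inner_simps inner_commute)
    qed (use gn in auto)
  qed
  have 1: "- M us \<in> subdiff (h1 f M) zs"
    unfolding subdiff_def esubdiff_def h1_def
    using conj_sub[where \<theta>=f and A=M and x=us and T=F and zs=zs, OF lM F] sf F by auto
  have 2: "M us \<in> subdiff (h2 g C d) zs"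
    unfolding subdiff_def esubdiff_def h2_def
  proof (intro CollectI allI)
    fix z'
    have c: "fconj g (- adjoint C z') \<ge> fconj g (- adjoint C zs) + ereal ((- C vs) \<bullet> (z' - zs) - 0)"
      using conj_sub[where \<theta>=g and A=C and x=vs and T=G and zs=zs and z'=z', OF lC G] sg G by auto
    have r: "d \<bullet> zs + (M us \<bullet> (z' - zs) - 0) = (- C vs) \<bullet> (z' - zs) - 0 + d \<bullet> z'"
      unfolding dC[symmetric] by (simp add: inner_simps inner_commute algebra_simps)
    have "fconj g (- adjoint C zs) + ereal (d \<bullet> zs) + ereal (M us \<bullet> (z' - zs) - 0)
        = fconj g (- adjoint C zs) + ereal (d \<bullet> zs + (M us \<bullet> (z' - zs) - 0))"
      by (simp add: add.assoc)
    also have "\<dots> = fconj g (- adjoint C zs) + ereal ((- C vs) \<bullet> (z' - zs) - 0 + d \<bullet> z')"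
      using r by simp
    also have "\<dots> = fconj g (- adjoint C zs) + ereal ((- C vs) \<bullet> (z' - zs) - 0) + ereal (d \<bullet> z')"
      by (simp add: add.assoc)
    also have "\<dots> \<le> fconj g (- adjoint C z') + ereal (d \<bullet> z')"
      using c by (rule add_right_mono)
    finally show "fconj g (- adjoint C zs) + ereal (d \<bullet> zs) + ereal (M us \<bullet> (z' - zs) - 0)
        \<le> fconj g (- adjoint C z') + ereal (d \<bullet> z')" .
  qed
  show ?thesis using 1 2 by (simp add: Se_def)
qed


lemma esub_avg:
  fixes \<theta> :: "'a::euclidean_space \<Rightarrow> ereal" and I :: "nat set"
    and \<mu> T :: "nat \<Rightarrow> real" and pts s :: "nat \<Rightarrow> 'a"
  assumes conv: "convex_fun \<theta>" and fI: "finite I" and s1: "sum \<mu> I = 1"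
    and nn: "\<And>j. j \<in> I \<Longrightarrow> \<mu> j \<ge> 0"
    and Tj: "\<And>j. j \<in> I \<Longrightarrow> \<theta> (pts j) = ereal (T j)"
    and sg: "\<And>j x'. j \<in> I \<Longrightarrow> \<theta> x' \<ge> \<theta> (pts j) + ereal (s j \<bullet> (x' - pts j) - 0)"
  shows "(\<Sum>j\<in>I. \<mu> j *\<^sub>R s j) \<in> esubdiff (\<Sum>j\<in>I. \<mu> j * ((pts j - (\<Sum>i\<in>I. \<mu> i *\<^sub>R pts i)) \<bullet> s j)) \<theta> (\<Sum>i\<in>I. \<mu> i *\<^sub>R pts i)"
proof -
  define pb where "pb = (\<Sum>i\<in>I. \<mu> i *\<^sub>R pts i)"
  define sb where "sb = (\<Sum>j\<in>I. \<mu> j *\<^sub>R s j)"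
  have "(\<Sum>j\<in>I. \<mu> j *\<^sub>R (pts j, T j)) \<in> epigraph_e \<theta>"
    using conv fI s1 nn Tj by (intro convex_sum) (auto simp: convex_fun_def epigraph_e_def)
  moreover have "(\<Sum>j\<in>I. \<mu> j *\<^sub>R (pts j, T j)) = (pb, \<Sum>j\<in>I. \<mu> j * T j)"
    by (simp add: pb_def prod_eq_iff fst_sum snd_sum)
  ultimately have J: "\<theta> pb \<le> ereal (\<Sum>j\<in>I. \<mu> j * T j)" by (simp add: epigraph_e_def)
  have Ine: "I \<noteq> {}" using s1 by auto
  then obtain j0 where j0: "j0 \<in> I" by auto
  show ?thesis unfolding esubdiff_def pb_def[symmetric] sb_def[symmetric]
  proof (intro CollectI allI)
    fix x'
    show "\<theta> pb + ereal (sb \<bullet> (x' - pb) - (\<Sum>j\<in>I. \<mu> j * ((pts j - pb) \<bullet> s j))) \<le> \<theta> x'"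
    proof (cases "\<theta> x'")
      case PInf thus ?thesis by simp
    next
      case MInf
      with sg[OF j0, of x'] Tj[OF j0] show ?thesis by simp
    next
      case (real X)
      have each: "T j + s j \<bullet> (x' - pts j) \<le> X" if "j \<in> I" for j
        using sg[OF that, of x'] Tj[OF that] real by simp
      have "(\<Sum>j\<in>I. \<mu> j * (T j + s j \<bullet> (x' - pts j))) \<le> (\<Sum>j\<in>I. \<mu> j * X)"
        using each nn by (intro sum_mono mult_left_mono) auto
      also have "\<dots> = X" using s1 by (simp add: sum_distrib_right[symmetric])
      finally have A: "(\<Sum>j\<in>I. \<mu> j * T j) + (\<Sum>j\<in>I. \<mu> j * (s j \<bullet> (x' - pts j))) \<le> X"
        by (simp add: distrib_left sum.distrib)
      have B: "sb \<bullet> (x' - pb) - (\<Sum>j\<in>I. \<mu> j * ((pts j - pb) \<bullet> s j))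
             = (\<Sum>j\<in>I. \<mu> j * (s j \<bullet> (x' - pts j)))"
      proof -
        have "sb \<bullet> (x' - pb) = (\<Sum>j\<in>I. \<mu> j * (s j \<bullet> (x' - pb)))"
          by (simp add: sb_def inner_sum_left)
        thus ?thesis
          by (simp add: sum_subtractf[symmetric] inner_simps inner_commute algebra_simps)
      qed
      have "\<theta> pb + ereal (sb \<bullet> (x' - pb) - (\<Sum>j\<in>I. \<mu> j * ((pts j - pb) \<bullet> s j)))
          \<le> ereal (\<Sum>j\<in>I. \<mu> j * T j) + ereal (\<Sum>j\<in>I. \<mu> j * (s j \<bullet> (x' - pts j)))"
        unfolding B by (rule add_right_mono[OF J])
      also have "\<dots> \<le> \<theta> x'" using A real by simp
      finally show ?thesis .
    qed
  qed
qed


lemma gamma_props: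
  fixes m q d w :: "'c::real_inner" and lam gam :: real
  assumes lam: "lam > 0" and nz: "norm (m + q - d) + norm (m - w) \<noteq> 0"
    and gdef: "gam = (lam * (norm (q - d + w))\<^sup>2 + lam * ((d - q - m) \<bullet> (w - m)))
                     / ((norm (m + q - d))\<^sup>2 + lam\<^sup>2 * (norm (m - w))\<^sup>2)"
  shows "gam * ((norm (m + q - d))\<^sup>2 + lam\<^sup>2 * (norm (m - w))\<^sup>2)
           = lam * ((norm (q - d + w))\<^sup>2 + (d - q - m) \<bullet> (w - m))"
    and "gam \<ge> min lam (1 / lam) / 2" and "gam > 0"
proof -
  define b where "b = m + q - d"
  define c where "c = m - w"
  have e1: "q - d + w = b - c" by (simp add: b_def c_def algebra_simps)
  have e2: "(d - q - m) \<bullet> (w - m) = b \<bullet> c"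
  proof -
    have "d - q - m = - b" "w - m = - c" by (simp_all add: b_def c_def algebra_simps)
    thus ?thesis by simp
  qed
  define D where "D = (norm b)\<^sup>2 + lam\<^sup>2 * (norm c)\<^sup>2"
  define N where "N = (norm (b - c))\<^sup>2 + b \<bullet> c"
  have Dpos: "D > 0"
  proof -
    have "b \<noteq> 0 \<or> c \<noteq> 0" using nz by (auto simp: b_def c_def)
    thus ?thesis using lam by (auto simp: D_def intro: add_pos_nonneg add_nonneg_pos)
  qed
  have N2: "2 * N = (norm b)\<^sup>2 + (norm c)\<^sup>2 + (norm (b - c))\<^sup>2"
    unfolding N_def power2_norm_eq_inner by (simp add: inner_simps inner_commute algebra_simps)
  have Nge: "2 * N \<ge> (norm b)\<^sup>2 + (norm c)\<^sup>2" using N2 by simp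
  have g: "gam = lam * N / D" using gdef by (simp add: e1 e2 b_def[symmetric] c_def[symmetric] D_def N_def distrib_left)
  show "gam * ((norm (m + q - d))\<^sup>2 + lam\<^sup>2 * (norm (m - w))\<^sup>2)
           = lam * ((norm (q - d + w))\<^sup>2 + (d - q - m) \<bullet> (w - m))"
    using g Dpos by (simp add: e1 e2 b_def[symmetric] c_def[symmetric] D_def[symmetric] N_def[symmetric])
  define tau where "tau = min lam (1 / lam)"
  have t1: "tau \<le> lam" and t2: "tau * lam \<le> 1" and t0: "tau > 0"
    using lam by (auto simp: tau_def min_def field_simps)
  have "tau * D \<le> lam * ((norm b)\<^sup>2 + (norm c)\<^sup>2)"
  proof -
    have "tau * (norm b)\<^sup>2 \<le> lam * (norm b)\<^sup>2" using t1 by (intro mult_right_mono) auto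
    moreover have "tau * (lam\<^sup>2 * (norm c)\<^sup>2) \<le> lam * (norm c)\<^sup>2"
    proof -
      have "tau * (lam\<^sup>2 * (norm c)\<^sup>2) = lam * ((tau * lam) * (norm c)\<^sup>2)" by (simp add: power2_eq_square)
      also have "\<dots> \<le> lam * (1 * (norm c)\<^sup>2)" using t2 lam by (intro mult_left_mono mult_right_mono) auto
      finally show ?thesis by simp
    qed
    ultimately show ?thesis by (simp add: D_def distrib_left)
  qed
  also have "\<dots> \<le> lam * (2 * N)" using Nge lam by (intro mult_left_mono) auto
  finally have "tau * D \<le> 2 * (lam * N)" by simp
  hence "tau / 2 \<le> lam * N / D" using Dpos by (simp add: field_simps)
  thus "gam \<ge> min lam (1 / lam) / 2" using g by (simp add: tau_def)
  moreover have "0 < min lam (1 / lam) / 2" using t0 by (simp add: tau_def)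
  ultimately show "gam > 0" by linarith
qed

lemma step_ineq:
  fixes z w m q d qz qw :: "'c::real_inner" and lam rho gam :: real
  assumes lam: "lam > 0" and r0: "0 \<le> rho" and r2: "rho \<le> 2" and g0: "gam \<ge> 0"
    and gD: "gam * ((norm (m + q - d))\<^sup>2 + lam\<^sup>2 * (norm (m - w))\<^sup>2)
           = lam * ((norm (q - d + w))\<^sup>2 + (d - q - m) \<bullet> (w - m))"
  shows "2 * (rho * gam) * ((qz - (z + lam *\<^sub>R w + lam *\<^sub>R (q - d) - lam *\<^sub>R (w - m))) \<bullet> (m - qw)
             + (qz - (z + lam *\<^sub>R w + lam *\<^sub>R (q - d))) \<bullet> (qw + (m + q - d - m)))
         \<le> ((norm (qz - z))\<^sup>2 + (norm (qw - w))\<^sup>2)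
           - ((norm (qz - (z + (rho * gam) *\<^sub>R (m + q - d))))\<^sup>2
              + (norm (qw - (w - (rho * gam * lam) *\<^sub>R (w - m))))\<^sup>2)"
proof -
  define al where "al = rho * gam"
  define D where "D = (norm (m + q - d))\<^sup>2 + lam\<^sup>2 * (norm (m - w))\<^sup>2"
  define N where "N = (norm (q - d + w))\<^sup>2 + (d - q - m) \<bullet> (w - m)"
  have id: "(inner (qz - z) (qz - z) + inner (qw - w) (qw - w))
         - (inner (qz - (z + al *\<^sub>R (m + (q - d)))) (qz - (z + al *\<^sub>R (m + (q - d))))
            + inner (qw - (w - (al * lam) *\<^sub>R (w - m))) (qw - (w - (al * lam) *\<^sub>R (w - m))))
       - 2 * al * (inner (qz - (z + lam *\<^sub>R w + lam *\<^sub>R (q - d) - lam *\<^sub>R (w - m))) (m - qw)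
          + inner (qz - (z + lam *\<^sub>R w + lam *\<^sub>R (q - d))) (qw + (q - d)))
       = 2 * al * lam * (inner ((q - d) + w) ((q - d) + w) + inner (- (q - d) - m) (w - m))
         - al^2 * (inner (m + (q - d)) (m + (q - d)) + lam^2 * inner (m - w) (m - w))"
    by (rule step_identity)
  have eN: "inner ((q - d) + w) ((q - d) + w) + inner (- (q - d) - m) (w - m) = N"
    unfolding N_def power2_norm_eq_inner by (simp add: algebra_simps)
  have eD: "inner (m + (q - d)) (m + (q - d)) + lam^2 * inner (m - w) (m - w) = D"
    unfolding D_def power2_norm_eq_inner by (simp add: algebra_simps)
  have gD': "gam * D = lam * N" using gD by (simp add: D_def N_def)
  have "2 * al * lam * N - al^2 * D = 2*rho*gam*(lam*N) - (rho*gam)^2 * D" by (simp add: al_def algebra_simps)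
  also have "\<dots> = 2*rho*gam*(gam*D) - (rho*gam)^2*D" using gD' by simp
  also have "\<dots> = rho * gam * gam * D * (2 - rho)" by (simp add: power2_eq_square algebra_simps)
  finally have "2 * al * lam * N - al^2 * D = rho * gam * gam * D * (2 - rho)" .
  moreover have "rho * gam * gam * D * (2 - rho) \<ge> 0"
    using r0 r2 g0 by (simp add: D_def)
  ultimately have "2 * al * lam * N - al^2 * D \<ge> 0" by simp
  hence "0 \<le> (inner (qz - z) (qz - z) + inner (qw - w) (qw - w))
         - (inner (qz - (z + al *\<^sub>R (m + (q - d)))) (qz - (z + al *\<^sub>R (m + (q - d))))
            + inner (qw - (w - (al * lam) *\<^sub>R (w - m))) (qw - (w - (al * lam) *\<^sub>R (w - m))))
       - 2 * al * (inner (qz - (z + lam *\<^sub>R w + lam *\<^sub>R (q - d) - lam *\<^sub>R (w - m))) (m - qw)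
          + inner (qz - (z + lam *\<^sub>R w + lam *\<^sub>R (q - d))) (qw + (q - d)))"
    using id eN eD by simp
  moreover have "m + q - d - m = q - d" "m + (q - d) = m + q - d" by (simp_all add: algebra_simps)
  ultimately show ?thesis unfolding power2_norm_eq_inner al_def by simp
qed


lemma XU_bound:
  fixes z w m q d zs ws :: "'c::real_inner" and lam :: real
  assumes lam: "lam > 0"
    and mono1: "(zs - (z + lam *\<^sub>R w + lam *\<^sub>R (q - d))) \<bullet> (q - d + ws) \<ge> 0"
    and mono2: "(zs - (z + lam *\<^sub>R w + lam *\<^sub>R (q - d) - lam *\<^sub>R (w - m))) \<bullet> (m - ws) \<ge> 0"
  shows "(norm (z + lam *\<^sub>R w + lam *\<^sub>R (q - d) - zs))\<^sup>2 + (norm (m - ws))\<^sup>2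
         \<le> (5 + lam\<^sup>2 + 1 / lam\<^sup>2) * ((norm (z - zs))\<^sup>2 + (norm (w - ws))\<^sup>2)"
proof -
  define X where "X = z + lam *\<^sub>R w + lam *\<^sub>R (q - d) - zs"
  define N where "N = q - d + ws"
  define s where "s = z - zs"
  define t where "t = w - ws"
  define U where "U = m - ws"
  define Y where "Y = X - lam *\<^sub>R t + lam *\<^sub>R U"
  have "zs - (z + lam *\<^sub>R w + lam *\<^sub>R (q - d)) = - X" by (simp add: X_def)
  hence XN: "X \<bullet> N \<le> 0" using mono1 by (simp add: N_def)
  have e1: "X - lam *\<^sub>R N = s + lam *\<^sub>R t"
    by (simp add: X_def N_def s_def t_def algebra_simps)
  have "(norm (s + lam *\<^sub>R t))\<^sup>2 = (norm X)\<^sup>2 - 2 * lam * (X \<bullet> N) + lam\<^sup>2 * (norm N)\<^sup>2"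
    unfolding e1[symmetric] power2_norm_eq_inner by (simp add: inner_simps inner_commute power2_eq_square algebra_simps)
  moreover have "2 * lam * (X \<bullet> N) \<le> 0" using XN lam by (simp add: mult_nonneg_nonpos)
  moreover have "lam\<^sup>2 * (norm N)\<^sup>2 \<ge> 0" by simp
  ultimately have "(norm X)\<^sup>2 \<le> (norm (s + lam *\<^sub>R t))\<^sup>2" by linarith
  hence "norm X \<le> norm (s + lam *\<^sub>R t)" by (rule power2_le_imp_le) simp
  also have "\<dots> \<le> norm s + lam * norm t" using norm_triangle_ineq[of s "lam *\<^sub>R t"] lam by simp
  finally have nX: "norm X \<le> norm s + lam * norm t" .
  have YU: "Y \<bullet> U \<le> 0"
  proof -
    have "Y = z + lam *\<^sub>R w + lam *\<^sub>R (q - d) - lam *\<^sub>R (w - m) - zs"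
      by (simp add: Y_def X_def t_def U_def algebra_simps)
    hence "(zs - (z + lam *\<^sub>R w + lam *\<^sub>R (q - d) - lam *\<^sub>R (w - m))) = - Y" by simp
    with mono2 show ?thesis by (simp add: U_def)
  qed
  have e2: "Y - lam *\<^sub>R U = X - lam *\<^sub>R t" by (simp add: Y_def)
  have "(norm (X - lam *\<^sub>R t))\<^sup>2 = (norm Y)\<^sup>2 - 2 * lam * (Y \<bullet> U) + lam\<^sup>2 * (norm U)\<^sup>2"
    unfolding e2[symmetric] power2_norm_eq_inner by (simp add: inner_simps inner_commute power2_eq_square algebra_simps)
  moreover have "2 * lam * (Y \<bullet> U) \<le> 0" using YU lam by (simp add: mult_nonneg_nonpos)
  moreover have "(norm Y)\<^sup>2 \<ge> 0" by simp
  ultimately have "lam\<^sup>2 * (norm U)\<^sup>2 \<le> (norm (X - lam *\<^sub>R t))\<^sup>2" by linarith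
  hence "(lam * norm U)\<^sup>2 \<le> (norm (X - lam *\<^sub>R t))\<^sup>2" by (simp add: power_mult_distrib)
  hence "lam * norm U \<le> norm (X - lam *\<^sub>R t)" by (rule power2_le_imp_le) simp
  also have "\<dots> \<le> norm X + lam * norm t" using norm_triangle_ineq4[of X "lam *\<^sub>R t"] lam by simp
  finally have "lam * norm U \<le> norm s + 2 * lam * norm t" using nX by simp
  hence nU: "norm U \<le> norm s / lam + 2 * norm t" using lam by (simp add: field_simps)
  define S where "S = norm s"
  define T where "T = norm t"
  have S0: "S \<ge> 0" "T \<ge> 0" by (simp_all add: S_def T_def)
  have a: "(norm X)\<^sup>2 \<le> (S + lam * T)\<^sup>2"
    using nX S0 lam by (intro power_mono) (auto simp: S_def T_def)
  have b: "(norm U)\<^sup>2 \<le> (S / lam + 2 * T)\<^sup>2"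
    using nU S0 lam by (intro power_mono) (auto simp: S_def T_def)
  have c1: "(S + lam * T)\<^sup>2 \<le> (1 + lam\<^sup>2) * (S\<^sup>2 + T\<^sup>2)"
  proof -
    have "(1 + lam\<^sup>2) * (S\<^sup>2 + T\<^sup>2) - (S + lam * T)\<^sup>2 = (lam * S - T)\<^sup>2"
      by (simp add: power2_eq_square algebra_simps)
    thus ?thesis by (smt (verit) zero_le_power2)
  qed
  have c2: "(S / lam + 2 * T)\<^sup>2 \<le> (1 / lam\<^sup>2 + 4) * (S\<^sup>2 + T\<^sup>2)"
  proof -
    have "(1 / lam\<^sup>2 + 4) * (S\<^sup>2 + T\<^sup>2) - (S / lam + 2 * T)\<^sup>2 = (2 * S - T / lam)\<^sup>2"
      using lam by (simp add: power2_eq_square field_simps)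
    thus ?thesis by (smt (verit) zero_le_power2)
  qed
  have "(norm X)\<^sup>2 + (norm U)\<^sup>2 \<le> (1 + lam\<^sup>2) * (S\<^sup>2 + T\<^sup>2) + (1 / lam\<^sup>2 + 4) * (S\<^sup>2 + T\<^sup>2)"
    using a b c1 c2 by linarith
  also have "\<dots> = (5 + lam\<^sup>2 + 1 / lam\<^sup>2) * (S\<^sup>2 + T\<^sup>2)" by (simp add: algebra_simps)
  finally show ?thesis by (simp add: X_def U_def S_def T_def s_def t_def)
qed


lemma telescope:
  fixes f :: "nat \<Rightarrow> 'c::ab_group_add"
  shows "(\<Sum>j=1..k. f j - f (j - 1)) = f k - f 0"
  by (induction k) (auto simp: sum.atLeast1_atMost_eq)

lemma eps_identity:
  fixes al :: "nat \<Rightarrow> real" and X Y MU CV :: "nat \<Rightarrow> 'c::real_inner" and I :: "nat set"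
  assumes G: "G = sum al I" "G \<noteq> 0"
    and xb: "xb = (1 / G) *\<^sub>R (\<Sum>j\<in>I. al j *\<^sub>R X j)"
    and mb: "mb = (1 / G) *\<^sub>R (\<Sum>j\<in>I. al j *\<^sub>R MU j)"
    and cb: "cb = (1 / G) *\<^sub>R (\<Sum>j\<in>I. al j *\<^sub>R CV j)"
  shows "(\<Sum>j\<in>I. al j * ((xb - Y j) \<bullet> (MU j - mb) + (xb - X j) \<bullet> (mb + (CV j - d))))
       = (\<Sum>j\<in>I. al j * ((mb - MU j) \<bullet> Y j + (cb - CV j) \<bullet> X j))"
proof -
  have sX: "(\<Sum>j\<in>I. al j *\<^sub>R X j) = G *\<^sub>R xb" using xb G by simp
  have sM: "(\<Sum>j\<in>I. al j *\<^sub>R MU j) = G *\<^sub>R mb" using mb G by simp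
  have sC: "(\<Sum>j\<in>I. al j *\<^sub>R CV j) = G *\<^sub>R cb" using cb G by simp
  have pj: "(xb - Y j) \<bullet> (MU j - mb) + (xb - X j) \<bullet> (mb + (CV j - d))
            - ((mb - MU j) \<bullet> Y j + (cb - CV j) \<bullet> X j)
          = xb \<bullet> MU j + xb \<bullet> CV j - xb \<bullet> d - X j \<bullet> mb + X j \<bullet> d - cb \<bullet> X j" for j
    by (simp add: inner_simps inner_commute algebra_simps)
  have "(\<Sum>j\<in>I. al j * ((xb - Y j) \<bullet> (MU j - mb) + (xb - X j) \<bullet> (mb + (CV j - d))))
       - (\<Sum>j\<in>I. al j * ((mb - MU j) \<bullet> Y j + (cb - CV j) \<bullet> X j))
     = (\<Sum>j\<in>I. al j * (xb \<bullet> MU j + xb \<bullet> CV j - xb \<bullet> d - X j \<bullet> mb + X j \<bullet> d - cb \<bullet> X j))"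
    by (simp add: sum_subtractf[symmetric] right_diff_distrib[symmetric] pj)
  also have "\<dots> = xb \<bullet> (\<Sum>j\<in>I. al j *\<^sub>R MU j) + xb \<bullet> (\<Sum>j\<in>I. al j *\<^sub>R CV j) - (sum al I) * (xb \<bullet> d)
       - (\<Sum>j\<in>I. al j *\<^sub>R X j) \<bullet> mb + (\<Sum>j\<in>I. al j *\<^sub>R X j) \<bullet> d - cb \<bullet> (\<Sum>j\<in>I. al j *\<^sub>R X j)"
    by (simp add: inner_sum_left inner_sum_right sum.distrib sum_subtractf algebra_simps sum_distrib_right)
  also have "\<dots> = 0" unfolding sX sM sC G(1)[symmetric]
    by (simp add: inner_commute algebra_simps)
  finally show ?thesis by simp
qed

lemma infdist_pass:
  fixes A :: "'p::metric_space set"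
  assumes ne: "A \<noteq> {}" and c: "c > 0"
    and b: "\<And>a. a \<in> A \<Longrightarrow> X \<le> c * dist p a"
  shows "X \<le> c * infdist p A"
proof -
  have "X / c \<le> infdist p A"
    unfolding infdist_notempty[OF ne]
    by (rule cINF_greatest[OF ne]) (use b c in \<open>simp add: field_simps\<close>)
  thus ?thesis using c by (simp add: field_simps)
qed

lemma infdist_pass2:
  fixes A :: "'p::metric_space set"
  assumes ne: "A \<noteq> {}" and c: "c > 0"
    and b: "\<And>a. a \<in> A \<Longrightarrow> X \<le> c * (dist p a)\<^sup>2"
  shows "X \<le> c * (infdist p A)\<^sup>2"
proof (cases "X \<le> 0")
  case True
  have "0 \<le> c * (infdist p A)\<^sup>2" using c by simp
  thus ?thesis using True by linarith
next
  case False
  have "sqrt (X / c) \<le> 1 * infdist p A"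
  proof (rule infdist_pass[OF ne])
    fix a assume "a \<in> A"
    hence "X / c \<le> (dist p a)\<^sup>2" using b c by (simp add: field_simps)
    thus "sqrt (X / c) \<le> 1 * dist p a" using real_sqrt_le_mono by fastforce
  qed simp
  hence "(sqrt (X / c))\<^sup>2 \<le> (infdist p A)\<^sup>2" using False c by (intro power_mono) auto
  thus ?thesis using False c by (simp add: field_simps)
qed

theorem mainTheorem8:
  fixes f :: "'a::euclidean_space \<Rightarrow> ereal" and g :: "'b::euclidean_space \<Rightarrow> ereal"
    and M :: "'a \<Rightarrow> 'c::euclidean_space" and C :: "'b \<Rightarrow> 'c" and d :: 'c
    and lam rhobar :: real
    and u :: "nat \<Rightarrow> 'a" and v :: "nat \<Rightarrow> 'b" and z w :: "nat \<Rightarrow> 'c"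
    and gam rho :: "nat \<Rightarrow> real"
    and x y :: "nat \<Rightarrow> 'c" and Gam :: "nat \<Rightarrow> real"
    and ubar :: "nat \<Rightarrow> 'a" and vbar :: "nat \<Rightarrow> 'b" and xbar ybar :: "nat \<Rightarrow> 'c"
    and epsu epsv :: "nat \<Rightarrow> real" and d0 tau theta :: real
  assumes f: "proper_closed_convex f" and g: "proper_closed_convex g"
    and M: "linear M" and C: "linear C"
    and A1: "\<exists>us vs zs. saddle_point f g M C d us vs zs"
    and A2: "rel_interior (edom (fconj f)) \<inter> range (adjoint M) \<noteq> {}"
    and A3: "rel_interior (edom (fconj g)) \<inter> range (adjoint C) \<noteq> {}"
    and run: "pmm_run f g M C d lam rhobar u v z w gam rho"
    and x_def: "x = (\<lambda>k. z (k-1) + lam *\<^sub>R w (k-1) + lam *\<^sub>R (C (v k) - d))"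
    and y_def: "y = (\<lambda>k. z (k-1) + lam *\<^sub>R w (k-1) + lam *\<^sub>R (C (v k) - d) - lam *\<^sub>R (w (k-1) - M (u k)))"
    and Gam_def: "Gam = (\<lambda>k. \<Sum>j=1..k. rho j * gam j)"
    and ubar_def: "ubar = (\<lambda>k. (1 / Gam k) *\<^sub>R (\<Sum>j=1..k. (rho j * gam j) *\<^sub>R u j))"
    and vbar_def: "vbar = (\<lambda>k. (1 / Gam k) *\<^sub>R (\<Sum>j=1..k. (rho j * gam j) *\<^sub>R v j))"
    and xbar_def: "xbar = (\<lambda>k. (1 / Gam k) *\<^sub>R (\<Sum>j=1..k. (rho j * gam j) *\<^sub>R x j))"
    and ybar_def: "ybar = (\<lambda>k. (1 / Gam k) *\<^sub>R (\<Sum>j=1..k. (rho j * gam j) *\<^sub>R y j))"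
    and epsu_def: "epsu = (\<lambda>k. (1 / Gam k) * (\<Sum>j=1..k. rho j * gam j * ((u j - ubar k) \<bullet> (- adjoint M (y j)))))"
    and epsv_def: "epsv = (\<lambda>k. (1 / Gam k) * (\<Sum>j=1..k. rho j * gam j * ((v j - vbar k) \<bullet> (- adjoint C (x j)))))"
    and d0_def: "d0 = infdist (z 0, w 0) (Se (h1 f M) (h2 g C d))"
    and tau_def: "tau = min lam (1 / lam)"
    and theta_def: "theta = 1 / (tau\<^sup>2 * (1 - rhobar)\<^sup>2) + 1"
  shows "\<forall>k::nat. k \<ge> 1 \<longrightarrow>
           - adjoint C (xbar k) \<in> esubdiff (epsv k) g (vbar k) \<and>
           - adjoint M (ybar k) \<in> esubdiff (epsu k) f (ubar k) \<and>
           norm (M (ubar k) + C (vbar k) - d) \<le> 4 * d0 / (real k * (1 - rhobar) * tau) \<and>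
           norm (xbar k - ybar k) \<le> 4 * d0 / (real k * (1 - rhobar) * tau) \<and>
           epsu k + epsv k \<le> 8 * d0\<^sup>2 * theta / (real k * (1 - rhobar) * tau)"
proof (intro allI impI)
  fix k :: nat assume k1: "k \<ge> 1"
  have lam: "lam > 0" and rb0: "0 \<le> rhobar" and rb1: "rhobar < 1"
    using run by (auto simp: pmm_run_def)
  have R: "\<And>j. j \<ge> 1 \<Longrightarrow>
      (\<forall>v'. g (v j) + ereal ((z (j-1) + lam *\<^sub>R w (j-1)) \<bullet> (C (v j) - d)) + ereal (lam / 2 * (norm (C (v j) - d))\<^sup>2)
          \<le> g v' + ereal ((z (j-1) + lam *\<^sub>R w (j-1)) \<bullet> (C v' - d)) + ereal (lam / 2 * (norm (C v' - d))\<^sup>2)) \<and>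
      (\<forall>u'. f (u j) + ereal ((z (j-1) + lam *\<^sub>R (C (v j) - d)) \<bullet> M (u j)) + ereal (lam / 2 * (norm (M (u j)))\<^sup>2)
          \<le> f u' + ereal ((z (j-1) + lam *\<^sub>R (C (v j) - d)) \<bullet> M u') + ereal (lam / 2 * (norm (M u'))\<^sup>2)) \<and>
      norm (M (u j) + C (v j) - d) + norm (M (u j) - w (j-1)) \<noteq> 0 \<and>
      gam j = (lam * (norm (C (v j) - d + w (j-1)))\<^sup>2
               + lam * ((d - C (v j) - M (u j)) \<bullet> (w (j-1) - M (u j))))
             / ((norm (M (u j) + C (v j) - d))\<^sup>2 + lam\<^sup>2 * (norm (M (u j) - w (j-1)))\<^sup>2) \<and>
      1 - rhobar \<le> rho j \<and> rho j \<le> 1 + rhobar \<and>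
      z j = z (j-1) + (rho j * gam j) *\<^sub>R (M (u j) + C (v j) - d) \<and>
      w j = w (j-1) - (rho j * gam j * lam) *\<^sub>R (w (j-1) - M (u j))"
    using run unfolding pmm_run_def by blast
  have pf: "proper_fun f" and cf: "convex_fun f" using f by (auto simp: proper_closed_convex_def)
  have pg: "proper_fun g" and cg: "convex_fun g" using g by (auto simp: proper_closed_convex_def)
  define tau' where "tau' = min lam (1 / lam)"
  have tau_eq: "tau = tau'" by (simp add: tau_def tau'_def)
  have tpos: "tau > 0" using lam by (auto simp: tau_def)
  have tle1: "tau \<le> 1"
  proof (cases "lam \<le> 1")
    case True thus ?thesis by (simp add: tau_def min_le_iff_disj)
  next
    case False hence "1 / lam \<le> 1" by simp
    thus ?thesis by (simp add: tau_def min_le_iff_disj)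
  qed
  have gD: "gam j * ((norm (M (u j) + C (v j) - d))\<^sup>2 + lam\<^sup>2 * (norm (M (u j) - w (j-1)))\<^sup>2)
           = lam * ((norm (C (v j) - d + w (j-1)))\<^sup>2 + (d - C (v j) - M (u j)) \<bullet> (w (j-1) - M (u j)))"
    and gge: "gam j \<ge> tau / 2" and gpos: "gam j > 0" if "j \<ge> 1" for j
    using gamma_props[OF lam, of "M (u j)" "C (v j)" d "w (j-1)" "gam j"] R[OF that]
    by (auto simp: tau_def)
  have rho1: "1 - rhobar \<le> rho j" and rho2: "rho j \<le> 1 + rhobar" if "j \<ge> 1" for j
    using R[OF that] by auto
  define al where "al j = rho j * gam j" for j
  have alge: "al j \<ge> (1 - rhobar) * tau / 2" if "j \<ge> 1" for j
  proof -
    have "(1 - rhobar) * (tau / 2) \<le> rho j * gam j"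
      using rho1[OF that] gge[OF that] rb1 tpos by (intro mult_mono) auto
    thus ?thesis by (simp add: al_def)
  qed
  have alpos: "al j > 0" if "j \<ge> 1" for j
    using rho1[OF that] gpos[OF that] rb1 by (simp add: al_def)
  define I where "I = {1..k}"
  have fI: "finite I" by (simp add: I_def)
  have Gam_k: "Gam k = sum al I" by (simp add: Gam_def al_def I_def)
  have Gge: "Gam k \<ge> real k * ((1 - rhobar) * tau / 2)"
  proof -
    have "real k * ((1 - rhobar) * tau / 2) = (\<Sum>j\<in>I. (1 - rhobar) * tau / 2)" by (simp add: I_def)
    also have "\<dots> \<le> sum al I" by (intro sum_mono alge) (auto simp: I_def)
    finally show ?thesis by (simp add: Gam_k)
  qed
  have Gpos: "Gam k > 0"
  proof -
    have "0 < real k * ((1 - rhobar) * tau / 2)" using k1 rb1 tpos by simp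
    thus ?thesis using Gge by linarith
  qed
  have invG: "1 / Gam k \<le> 2 / (real k * (1 - rhobar) * tau)"
  proof -
    have p: "0 < real k * (1 - rhobar) * tau" using k1 rb1 tpos by simp
    have "real k * (1 - rhobar) * tau \<le> 2 * Gam k" using Gge by (simp add: algebra_simps)
    thus ?thesis using p Gpos by (simp add: field_simps)
  qed
  define Tg where "Tg j = real_of_ereal (g (v j))" for j
  define Tf where "Tf j = real_of_ereal (f (u j))" for j
  have xj: "x j = z (j-1) + lam *\<^sub>R w (j-1) + lam *\<^sub>R (C (v j) - d)" for j by (simp add: x_def)
  have yj: "y j = z (j-1) + lam *\<^sub>R w (j-1) + lam *\<^sub>R (C (v j) - d) - lam *\<^sub>R (w (j-1) - M (u j))" for j
    by (simp add: y_def)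
  have optg: "g (v j) = ereal (Tg j) \<and> (\<forall>v'. g v' \<ge> g (v j) + ereal ((- adjoint C (x j)) \<bullet> (v' - v j) - 0))"
    if j1: "j \<ge> 1" for j
  proof -
    have mn: "\<And>v'. g (v j) + ereal ((z (j-1) + lam *\<^sub>R w (j-1)) \<bullet> (C (v j) - d)) + ereal (lam / 2 * (norm (C (v j) - d))\<^sup>2)
          \<le> g v' + ereal ((z (j-1) + lam *\<^sub>R w (j-1)) \<bullet> (C v' - d)) + ereal (lam / 2 * (norm (C v' - d))\<^sup>2)"
      using R[OF j1] by blast
    have c0: "lam / 2 \<ge> 0" using lam by simp
    note oc = opt_cond[OF cg pg C c0 mn]
    have e: "z (j-1) + lam *\<^sub>R w (j-1) + (2 * (lam / 2)) *\<^sub>R (C (v j) - d) = x j" by (simp add: xj)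
    show ?thesis using oc(1) oc(2) unfolding e Tg_def by (simp add: ereal_real')
  qed
  have optf: "f (u j) = ereal (Tf j) \<and> (\<forall>u'. f u' \<ge> f (u j) + ereal ((- adjoint M (y j)) \<bullet> (u' - u j) - 0))"
    if j1: "j \<ge> 1" for j
  proof -
    have mn: "\<And>u'. f (u j) + ereal ((z (j-1) + lam *\<^sub>R (C (v j) - d)) \<bullet> (M (u j) - 0)) + ereal (lam / 2 * (norm (M (u j) - 0))\<^sup>2)
          \<le> f u' + ereal ((z (j-1) + lam *\<^sub>R (C (v j) - d)) \<bullet> (M u' - 0)) + ereal (lam / 2 * (norm (M u' - 0))\<^sup>2)"
      using R[OF j1] by simp
    have c0: "lam / 2 \<ge> 0" using lam by simp
    note oc = opt_cond[OF cf pf M c0 mn]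
    have e: "z (j-1) + lam *\<^sub>R (C (v j) - d) + (2 * (lam / 2)) *\<^sub>R (M (u j) - 0) = y j"
      by (simp add: yj algebra_simps)
    show ?thesis using oc(1) oc(2) unfolding e Tf_def by (simp add: ereal_real')
  qed
  define S where "S = Se (h1 f M) (h2 g C d)"
  obtain us vs zs where sp: "saddle_point f g M C d us vs zs" using A1 by blast
  have Sne: "S \<noteq> {}" using saddle_Se[OF pf pg M C sp] by (auto simp: S_def)
  have monoS: "(zs - y j) \<bullet> (M (u j) - ws) \<ge> 0 \<and> (zs - x j) \<bullet> (C (v j) - d + ws) \<ge> 0"
    if Sm: "(zs, ws) \<in> S" and j1: "j \<ge> 1" for zs ws j
  proof
    have h1s: "\<forall>z'. h1 f M z' \<ge> h1 f M zs + ereal ((- ws) \<bullet> (z' - zs) - 0)"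
      using Sm by (simp add: S_def Se_def subdiff_def esubdiff_def)
    have h2s: "\<forall>z'. h2 g C d z' \<ge> h2 g C d zs + ereal (ws \<bullet> (z' - zs) - 0)"
      using Sm by (simp add: S_def Se_def subdiff_def esubdiff_def)
    have "(zs - y j) \<bullet> (M (u j) + - ws) \<ge> 0"
    proof (rule mono_piece[where \<theta>=f and A=M and x="u j" and T="Tf j"])
      show "linear M" by (rule M)
      show "f (u j) = ereal (Tf j)" using optf[OF j1] by simp
      show "\<And>x'. f x' \<ge> f (u j) + ereal ((- adjoint M (y j)) \<bullet> (x' - u j) - 0)" using optf[OF j1] by blast
      show "fconj f (- adjoint M (y j)) \<ge> fconj f (- adjoint M zs) + ereal ((- ws) \<bullet> (y j - zs) - 0)"
        using h1s by (simp add: h1_def)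
    qed
    thus "(zs - y j) \<bullet> (M (u j) - ws) \<ge> 0" by simp
    have "(zs - x j) \<bullet> (C (v j) + (ws - d)) \<ge> 0"
    proof (rule mono_piece[where \<theta>=g and A=C and x="v j" and T="Tg j"])
      show "linear C" by (rule C)
      show "g (v j) = ereal (Tg j)" using optg[OF j1] by simp
      show "\<And>x'. g x' \<ge> g (v j) + ereal ((- adjoint C (x j)) \<bullet> (x' - v j) - 0)" using optg[OF j1] by blast
      have a: "fconj g (- adjoint C (x j)) + ereal (d \<bullet> x j) \<ge> (fconj g (- adjoint C zs) + ereal (d \<bullet> zs)) + ereal (ws \<bullet> (x j - zs) - 0)"
        using h2s by (simp add: h2_def)
      have b: "fconj g (- adjoint C (x j)) \<ge> (fconj g (- adjoint C zs) + ereal (d \<bullet> zs)) + ereal ((ws \<bullet> (x j - zs) - 0) - d \<bullet> x j)"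
        by (rule ereal_shift[OF a])
      have c: "(fconj g (- adjoint C zs) + ereal (d \<bullet> zs)) + ereal ((ws \<bullet> (x j - zs) - 0) - d \<bullet> x j)
             = fconj g (- adjoint C zs) + ereal ((ws - d) \<bullet> (x j - zs) - 0)"
      proof -
        have "d \<bullet> zs + ((ws \<bullet> (x j - zs) - 0) - d \<bullet> x j) = (ws - d) \<bullet> (x j - zs) - 0"
          by (simp add: inner_simps algebra_simps)
        thus ?thesis by (simp add: add.assoc)
      qed
      show "fconj g (- adjoint C (x j)) \<ge> fconj g (- adjoint C zs) + ereal ((ws - d) \<bullet> (x j - zs) - 0)"
        using b c by simp
    qed
    thus "(zs - x j) \<bullet> (C (v j) - d + ws) \<ge> 0" by (simp add: algebra_simps)
  qed
  define phi where "phi j qz qw = (qz - y j) \<bullet> (M (u j) - qw) + (qz - x j) \<bullet> (qw + (C (v j) - d))" for j qz qw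
  define FF where "FF qz qw j = (norm (qz - z j))\<^sup>2 + (norm (qw - w j))\<^sup>2" for qz qw j
  have step: "2 * al j * phi j qz qw \<le> FF qz qw (j - 1) - FF qz qw j" if j1: "j \<ge> 1" for j qz qw
  proof -
    have r0: "0 \<le> rho j" and r2: "rho j \<le> 2" using rho1[OF j1] rho2[OF j1] rb1 by auto
    have g0: "0 \<le> gam j" using gpos[OF j1] by simp
    note si = step_ineq[where z="z (j-1)" and w="w (j-1)" and m="M (u j)" and q="C (v j)" and d=d
        and qz=qz and qw=qw and lam=lam and rho="rho j" and gam="gam j", OF lam r0 r2 g0 gD[OF j1]]
    have zj: "z j = z (j-1) + (rho j * gam j) *\<^sub>R (M (u j) + C (v j) - d)"
      and wj: "w j = w (j-1) - (rho j * gam j * lam) *\<^sub>R (w (j-1) - M (u j))" using R[OF j1] by auto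
    have e: "M (u j) + C (v j) - d - M (u j) = C (v j) - d" by simp
    show ?thesis using si unfolding phi_def FF_def al_def xj yj zj wj e by simp
  qed
  have fejer: "FF zs ws j \<le> FF zs ws 0" if Sm: "(zs, ws) \<in> S" for zs ws j
  proof (induction j)
    case 0 show ?case by simp
  next
    case (Suc j)
    have "0 \<le> 2 * al (Suc j) * phi (Suc j) zs ws"
      using monoS[OF Sm, of "Suc j"] alpos[of "Suc j"] by (simp add: phi_def add.commute)
    with step[of "Suc j" zs ws] have "FF zs ws (Suc j) \<le> FF zs ws j" by simp
    with Suc show ?case by simp
  qed
  have FFdist: "FF zs ws j = (dist (z j, w j) (zs, ws))\<^sup>2" for zs ws j
    by (simp add: FF_def dist_norm norm_Pair norm_minus_commute)
  define G where "G = Gam k"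
  have Gp: "G > 0" using Gpos by (simp add: G_def)
  define mu where "mu j = al j / G" for j
  have smu: "sum mu I = 1" using Gp by (simp add: mu_def sum_divide_distrib[symmetric] Gam_k G_def)
  have mu0: "mu j \<ge> 0" if "j \<in> I" for j using alpos[of j] that Gp by (simp add: mu_def I_def)
  have I1: "j \<in> I \<Longrightarrow> j \<ge> 1" for j by (simp add: I_def)
  have avg: "(1 / G) *\<^sub>R (\<Sum>j=1..k. (rho j * gam j) *\<^sub>R pp j) = (\<Sum>j\<in>I. mu j *\<^sub>R pp j)"
    for pp :: "nat \<Rightarrow> 'e::real_vector"
    by (simp add: scaleR_sum_right I_def mu_def al_def divide_inverse mult.commute)
  have vb: "vbar k = (\<Sum>j\<in>I. mu j *\<^sub>R v j)" by (simp only: vbar_def G_def[symmetric] avg)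
  have ub: "ubar k = (\<Sum>j\<in>I. mu j *\<^sub>R u j)" by (simp only: ubar_def G_def[symmetric] avg)
  have xb: "xbar k = (\<Sum>j\<in>I. mu j *\<^sub>R x j)" by (simp only: xbar_def G_def[symmetric] avg)
  have yb: "ybar k = (\<Sum>j\<in>I. mu j *\<^sub>R y j)" by (simp only: ybar_def G_def[symmetric] avg)
  have lin_avg: "L (\<Sum>j\<in>I. mu j *\<^sub>R pp j) = (\<Sum>j\<in>I. mu j *\<^sub>R L (pp j))" if "linear L" for L pp
    using that by (simp add: linear_sum linear_scale)
  have linC': "linear (adjoint C)" by (rule adjoint_linear[OF C])
  have linM': "linear (adjoint M)" by (rule adjoint_linear[OF M])
  have ev: "epsv k = (\<Sum>j\<in>I. mu j * ((v j - vbar k) \<bullet> (- adjoint C (x j))))"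
    by (simp add: epsv_def sum_distrib_left I_def mu_def al_def G_def)
  have eu: "epsu k = (\<Sum>j\<in>I. mu j * ((u j - ubar k) \<bullet> (- adjoint M (y j))))"
    by (simp add: epsu_def sum_distrib_left I_def mu_def al_def G_def)
  have part1: "- adjoint C (xbar k) \<in> esubdiff (epsv k) g (vbar k)"
  proof -
    have "(\<Sum>j\<in>I. mu j *\<^sub>R (- adjoint C (x j))) \<in> esubdiff (\<Sum>j\<in>I. mu j * ((v j - (\<Sum>i\<in>I. mu i *\<^sub>R v i)) \<bullet> (- adjoint C (x j)))) g (\<Sum>i\<in>I. mu i *\<^sub>R v i)"
      by (rule esub_avg[OF cg fI smu mu0, where T=Tg]) (use optg I1 in blast)+
    moreover have "- adjoint C (xbar k) = (\<Sum>j\<in>I. mu j *\<^sub>R (- adjoint C (x j)))"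
      unfolding xb lin_avg[OF linC'] by (simp add: sum_negf)
    ultimately show ?thesis unfolding ev vb by simp
  qed
  have part2: "- adjoint M (ybar k) \<in> esubdiff (epsu k) f (ubar k)"
  proof -
    have "(\<Sum>j\<in>I. mu j *\<^sub>R (- adjoint M (y j))) \<in> esubdiff (\<Sum>j\<in>I. mu j * ((u j - (\<Sum>i\<in>I. mu i *\<^sub>R u i)) \<bullet> (- adjoint M (y j)))) f (\<Sum>i\<in>I. mu i *\<^sub>R u i)"
      by (rule esub_avg[OF cf fI smu mu0, where T=Tf]) (use optf I1 in blast)+
    moreover have "- adjoint M (ybar k) = (\<Sum>j\<in>I. mu j *\<^sub>R (- adjoint M (y j)))"
      unfolding yb lin_avg[OF linM'] by (simp add: sum_negf)
    ultimately show ?thesis unfolding eu ub by simp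
  qed
  have zstep: "z j - z (j-1) = al j *\<^sub>R (M (u j) + C (v j) - d)" if "j \<ge> 1" for j
  proof -
    have "z j = z (j-1) + (al j) *\<^sub>R (M (u j) + C (v j) - d)"
      using R[OF that] unfolding al_def by blast
    thus ?thesis by simp
  qed
  have wstep: "w j - w (j-1) = - (al j *\<^sub>R (x j - y j))" if "j \<ge> 1" for j
  proof -
    have xy: "x j - y j = lam *\<^sub>R (w (j-1) - M (u j))" by (simp add: xj yj)
    have "w j = w (j-1) - (al j * lam) *\<^sub>R (w (j-1) - M (u j))"
      using R[OF that] unfolding al_def by blast
    hence "w j - w (j-1) = - ((al j * lam) *\<^sub>R (w (j-1) - M (u j)))" by simp
    also have "\<dots> = - (al j *\<^sub>R (x j - y j))" unfolding xy by simp
    finally show ?thesis .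
  qed
  have zsum: "z k - z 0 = (\<Sum>j\<in>I. al j *\<^sub>R (M (u j) + C (v j) - d))"
    using telescope[of z k] zstep by (simp add: I_def)
  have wsum: "w k - w 0 = - (\<Sum>j\<in>I. al j *\<^sub>R (x j - y j))"
    using telescope[of w k] wstep by (simp add: I_def sum_negf)
  have toG: "(\<Sum>j\<in>I. mu j *\<^sub>R pp j) = (1 / G) *\<^sub>R (\<Sum>j\<in>I. al j *\<^sub>R pp j)" for pp :: "nat \<Rightarrow> 'c"
    by (simp add: scaleR_sum_right mu_def divide_inverse mult.commute)
  have dsum: "(\<Sum>j\<in>I. mu j *\<^sub>R d) = d" using smu by (simp add: scaleR_sum_left[symmetric])
  have res1: "M (ubar k) + C (vbar k) - d = (1 / G) *\<^sub>R (z k - z 0)"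
  proof -
    have "M (ubar k) + C (vbar k) - d = (\<Sum>j\<in>I. mu j *\<^sub>R M (u j)) + (\<Sum>j\<in>I. mu j *\<^sub>R C (v j)) - (\<Sum>j\<in>I. mu j *\<^sub>R d)"
      unfolding ub vb lin_avg[OF M] lin_avg[OF C] dsum ..
    also have "\<dots> = (\<Sum>j\<in>I. mu j *\<^sub>R (M (u j) + C (v j) - d))"
      by (simp add: sum.distrib sum_subtractf scaleR_right_diff_distrib scaleR_right_distrib)
    also have "\<dots> = (1 / G) *\<^sub>R (z k - z 0)" unfolding toG zsum ..
    finally show ?thesis .
  qed
  have res2: "xbar k - ybar k = - ((1 / G) *\<^sub>R (w k - w 0))"
  proof -
    have "xbar k - ybar k = (\<Sum>j\<in>I. mu j *\<^sub>R (x j - y j))"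
      unfolding xb yb by (simp add: sum_subtractf scaleR_right_diff_distrib)
    also have "\<dots> = - ((1 / G) *\<^sub>R (w k - w 0))" unfolding toG wsum by simp
    finally show ?thesis .
  qed
  have distk: "dist (z j, w j) p \<le> dist (z 0, w 0) p" if "p \<in> S" for p j
  proof -
    obtain zs ws where p: "p = (zs, ws)" by force
    have "(dist (z j, w j) p)\<^sup>2 \<le> (dist (z 0, w 0) p)\<^sup>2"
      using fejer[of zs ws j] that unfolding p FFdist by simp
    thus ?thesis by (rule power2_le_imp_le) simp
  qed
  have kb: "norm (z k - z 0) \<le> 2 * dist (z 0, w 0) p \<and> norm (w k - w 0) \<le> 2 * dist (z 0, w 0) p"
    if "p \<in> S" for p
  proof -
    have "dist (z k, w k) (z 0, w 0) \<le> dist (z k, w k) p + dist p (z 0, w 0)" by (rule dist_triangle)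
    also have "\<dots> \<le> 2 * dist (z 0, w 0) p" using distk[OF that, of k] by (simp add: dist_commute)
    finally have dk: "dist (z k, w k) (z 0, w 0) \<le> 2 * dist (z 0, w 0) p" .
    have "norm (z k - z 0) \<le> dist (z k, w k) (z 0, w 0)"
      using norm_fst_le[of "z k - z 0" "w k - w 0"] by (simp add: dist_norm)
    moreover have "norm (w k - w 0) \<le> dist (z k, w k) (z 0, w 0)"
      using norm_snd_le[of "w k - w 0" "z k - z 0"] by (simp add: dist_norm)
    ultimately show ?thesis using dk by linarith
  qed
  have kTpos: "real k * (1 - rhobar) * tau > 0" using k1 rb1 tpos by simp
  have cpos: "4 / (real k * (1 - rhobar) * tau) > 0" using k1 rb1 tpos by simp
  have invG': "1 / G \<le> 2 / (real k * (1 - rhobar) * tau)" using invG by (simp add: G_def)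
  have part3: "norm (M (ubar k) + C (vbar k) - d) \<le> 4 * d0 / (real k * (1 - rhobar) * tau)"
  proof -
    have "norm (M (ubar k) + C (vbar k) - d) \<le> 4 / (real k * (1 - rhobar) * tau) * infdist (z 0, w 0) S"
    proof (rule infdist_pass[OF Sne cpos])
      fix p assume pS: "p \<in> S"
      have "norm (M (ubar k) + C (vbar k) - d) = (1 / G) * norm (z k - z 0)" using res1 Gp by simp
      also have "\<dots> \<le> (2 / (real k * (1 - rhobar) * tau)) * (2 * dist (z 0, w 0) p)"
        using kb[OF pS] invG' Gp kTpos by (intro mult_mono) auto
      finally show "norm (M (ubar k) + C (vbar k) - d) \<le> 4 / (real k * (1 - rhobar) * tau) * dist (z 0, w 0) p"
        by simp
    qed
    thus ?thesis by (simp add: d0_def S_def)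
  qed
  have part4: "norm (xbar k - ybar k) \<le> 4 * d0 / (real k * (1 - rhobar) * tau)"
  proof -
    have "norm (xbar k - ybar k) \<le> 4 / (real k * (1 - rhobar) * tau) * infdist (z 0, w 0) S"
    proof (rule infdist_pass[OF Sne cpos])
      fix p assume pS: "p \<in> S"
      have "norm (xbar k - ybar k) = (1 / G) * norm (w k - w 0)" using res2 Gp by simp
      also have "\<dots> \<le> (2 / (real k * (1 - rhobar) * tau)) * (2 * dist (z 0, w 0) p)"
        using kb[OF pS] invG' Gp kTpos by (intro mult_mono) auto
      finally show "norm (xbar k - ybar k) \<le> 4 / (real k * (1 - rhobar) * tau) * dist (z 0, w 0) p"
        by simp
    qed
    thus ?thesis by (simp add: d0_def S_def)
  qed
  define xb' where "xb' = xbar k"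
  define mb' where "mb' = M (ubar k)"
  have Gsum: "G = sum al I" by (simp add: G_def Gam_k)
  have xbG: "xb' = (1 / G) *\<^sub>R (\<Sum>j\<in>I. al j *\<^sub>R x j)" unfolding xb'_def xb toG ..
  have mbG: "mb' = (1 / G) *\<^sub>R (\<Sum>j\<in>I. al j *\<^sub>R M (u j))" unfolding mb'_def ub lin_avg[OF M] toG ..
  have cbG: "C (vbar k) = (1 / G) *\<^sub>R (\<Sum>j\<in>I. al j *\<^sub>R C (v j))" unfolding vb lin_avg[OF C] toG ..
  have epsG: "G * (epsu k + epsv k) = (\<Sum>j\<in>I. al j * phi j xb' mb')"
  proof -
    have tu: "(u j - ubar k) \<bullet> (- adjoint M (y j)) = (mb' - M (u j)) \<bullet> y j" for j
      using adjoint_works[OF M, of "u j - ubar k" "y j"] linear_diff[OF M, of "u j" "ubar k"]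
      by (simp add: mb'_def inner_simps)
    have tv: "(v j - vbar k) \<bullet> (- adjoint C (x j)) = (C (vbar k) - C (v j)) \<bullet> x j" for j
      using adjoint_works[OF C, of "v j - vbar k" "x j"] linear_diff[OF C, of "v j" "vbar k"]
      by (simp add: inner_simps)
    have "G * (epsu k + epsv k) = (\<Sum>j\<in>I. al j * ((mb' - M (u j)) \<bullet> y j + (C (vbar k) - C (v j)) \<bullet> x j))"
      unfolding eu ev tu tv using Gp
      by (simp add: mu_def sum_distrib_left sum.distrib[symmetric] distrib_left)
    also have "\<dots> = (\<Sum>j\<in>I. al j * phi j xb' mb')"
      unfolding phi_def
      by (rule eps_identity[OF Gsum _ xbG mbG cbG, symmetric]) (use Gp in simp)
    finally show ?thesis .
  qed
  have sumstep: "2 * (\<Sum>j\<in>I. al j * phi j qz qw) \<le> FF qz qw 0" for qz qw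
  proof -
    have "2 * (\<Sum>j\<in>I. al j * phi j qz qw) = (\<Sum>j\<in>I. 2 * al j * phi j qz qw)"
      by (simp add: sum_distrib_left mult.assoc)
    also have "\<dots> \<le> (\<Sum>j\<in>I. FF qz qw (j - 1) - FF qz qw j)"
      by (intro sum_mono step) (simp add: I_def)
    also have "\<dots> = FF qz qw 0 - FF qz qw k"
      using telescope[of "\<lambda>j. - FF qz qw j" k] by (simp add: I_def sum_negf)
    also have "\<dots> \<le> FF qz qw 0" by (simp add: FF_def)
    finally show ?thesis .
  qed
  define K where "K = 5 + lam\<^sup>2 + 1 / lam\<^sup>2"
  have K0: "K \<ge> 0" by (simp add: K_def)
  have Kle: "K \<le> 6 + 1 / tau\<^sup>2"
  proof (cases "lam \<le> 1")
    case True
    have "lam * lam \<le> 1" using True lam by (intro mult_le_one) auto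
    hence "lam \<le> 1 / lam" using lam by (simp add: field_simps)
    hence "tau = lam" by (simp add: tau_def min_def)
    moreover have "lam\<^sup>2 \<le> 1" using True lam by (simp add: power_le_one)
    ultimately show ?thesis by (simp add: K_def)
  next
    case False
    have l1: "1 \<le> lam" using False by simp
    have "1 * 1 \<le> lam * lam" using l1 by (intro mult_mono) auto
    hence "1 / lam \<le> lam" using lam by (simp add: field_simps)
    hence "tau = 1 / lam" by (simp add: tau_def min_def)
    moreover have "1 / lam\<^sup>2 \<le> 1" using one_le_power[OF l1, of 2] by (simp add: divide_le_eq)
    ultimately show ?thesis by (simp add: K_def power_divide)
  qed
  have QpS: "dist p (xb', mb') \<le> sqrt K * dist (z 0, w 0) p" if pS: "p \<in> S" for p
  proof -
    obtain zs ws where p: "p = (zs, ws)" by force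
    define r where "r = dist (z 0, w 0) p"
    have each: "norm ((x j, M (u j)) - p) \<le> sqrt K * r" if jI: "j \<in> I" for j
    proof -
      have j1: "j \<ge> 1" using jI by (simp add: I_def)
      have ms: "(zs - y j) \<bullet> (M (u j) - ws) \<ge> 0 \<and> (zs - x j) \<bullet> (C (v j) - d + ws) \<ge> 0"
        using monoS[of zs ws j] pS j1 p by simp
      have xu: "(norm (z (j-1) + lam *\<^sub>R w (j-1) + lam *\<^sub>R (C (v j) - d) - zs))\<^sup>2 + (norm (M (u j) - ws))\<^sup>2
         \<le> (5 + lam\<^sup>2 + 1 / lam\<^sup>2) * ((norm (z (j-1) - zs))\<^sup>2 + (norm (w (j-1) - ws))\<^sup>2)"
        by (rule XU_bound[OF lam]) (use ms in \<open>simp_all add: xj yj\<close>)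
      have "(norm (z (j-1) - zs))\<^sup>2 + (norm (w (j-1) - ws))\<^sup>2 = (dist (z (j-1), w (j-1)) p)\<^sup>2"
        using FFdist[of zs ws "j-1"] by (simp add: FF_def p norm_minus_commute)
      also have "\<dots> \<le> r\<^sup>2" using distk[OF pS, of "j-1"] by (simp add: r_def power_mono)
      finally have "(norm ((x j, M (u j)) - p))\<^sup>2 \<le> K * r\<^sup>2"
        using xu K0 unfolding K_def[symmetric] by (simp add: p norm_Pair xj order_trans mult_left_mono)
      also have "\<dots> = (sqrt K * r)\<^sup>2" using K0 by (simp add: power_mult_distrib)
      finally show ?thesis by (rule power2_le_imp_le) (use K0 in \<open>simp add: r_def\<close>)
    qed
    have "(xb', mb') - p = (\<Sum>j\<in>I. mu j *\<^sub>R ((x j, M (u j)) - p))"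
    proof -
      have "(\<Sum>j\<in>I. mu j *\<^sub>R ((x j, M (u j)) - p)) = (\<Sum>j\<in>I. mu j *\<^sub>R (x j, M (u j))) - (\<Sum>j\<in>I. mu j *\<^sub>R p)"
        by (simp add: scaleR_right_diff_distrib sum_subtractf)
      also have "(\<Sum>j\<in>I. mu j *\<^sub>R p) = p" using smu by (simp add: scaleR_sum_left[symmetric])
      also have "(\<Sum>j\<in>I. mu j *\<^sub>R (x j, M (u j))) = (xb', mb')"
        unfolding xb'_def mb'_def xb ub lin_avg[OF M] by (simp add: prod_eq_iff fst_sum snd_sum)
      finally show ?thesis by simp
    qed
    hence "dist p (xb', mb') = norm (\<Sum>j\<in>I. mu j *\<^sub>R ((x j, M (u j)) - p))"
      by (metis dist_commute dist_norm)
    also have "\<dots> \<le> (\<Sum>j\<in>I. norm (mu j *\<^sub>R ((x j, M (u j)) - p)))" by (rule norm_sum)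
    also have "\<dots> \<le> (\<Sum>j\<in>I. mu j * (sqrt K * r))"
      using mu0 each by (intro sum_mono) (simp add: mult_left_mono)
    also have "\<dots> = sqrt K * r" using smu by (simp add: sum_distrib_right[symmetric])
    finally show ?thesis by (simp add: r_def)
  qed
  have thpos: "8 * theta / (real k * (1 - rhobar) * tau) > 0"
  proof -
    have "theta > 0" unfolding theta_def by (intro add_nonneg_pos) auto
    thus ?thesis using kTpos by simp
  qed
  have part5: "epsu k + epsv k \<le> 8 * d0\<^sup>2 * theta / (real k * (1 - rhobar) * tau)"
  proof -
    have "epsu k + epsv k \<le> 8 * theta / (real k * (1 - rhobar) * tau) * (infdist (z 0, w 0) S)\<^sup>2"
    proof (rule infdist_pass2[OF Sne thpos])
      fix p assume pS: "p \<in> S"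
      define r where "r = dist (z 0, w 0) p"
      have r0: "r \<ge> 0" by (simp add: r_def)
      have "2 * (G * (epsu k + epsv k)) \<le> FF xb' mb' 0" unfolding epsG by (rule sumstep)
      also have "FF xb' mb' 0 = (dist (z 0, w 0) (xb', mb'))\<^sup>2" by (rule FFdist)
      also have "\<dots> \<le> (r + sqrt K * r)\<^sup>2"
      proof (rule power_mono)
        have "dist (z 0, w 0) (xb', mb') \<le> dist (z 0, w 0) p + dist p (xb', mb')" by (rule dist_triangle)
        thus "dist (z 0, w 0) (xb', mb') \<le> r + sqrt K * r" using QpS[OF pS] by (simp add: r_def)
      qed simp
      also have "\<dots> \<le> 2 * ((1 + K) * r\<^sup>2)"
      proof -
        have "(r + sqrt K * r)\<^sup>2 = r\<^sup>2 + 2 * (sqrt K * r) * r + K * r\<^sup>2"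
          using K0 by (simp add: power2_eq_square algebra_simps)
        moreover have "2 * (sqrt K * r) * r \<le> r\<^sup>2 + K * r\<^sup>2"
        proof -
          have "0 \<le> (sqrt K * r - r)\<^sup>2" by simp
          thus ?thesis using K0 by (simp add: power2_eq_square algebra_simps)
        qed
        ultimately show ?thesis by (simp add: algebra_simps)
      qed
      finally have e1: "G * (epsu k + epsv k) \<le> (1 + K) * r\<^sup>2" by simp
      hence "epsu k + epsv k \<le> (1 / G) * ((1 + K) * r\<^sup>2)" using Gp by (simp add: field_simps)
      also have "\<dots> \<le> (2 / (real k * (1 - rhobar) * tau)) * ((1 + K) * r\<^sup>2)"
        using invG' K0 by (intro mult_right_mono) auto
      also have "\<dots> \<le> (2 / (real k * (1 - rhobar) * tau)) * ((7 + 1 / tau\<^sup>2) * r\<^sup>2)"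
        using Kle kTpos by (intro mult_left_mono mult_right_mono) auto
      also have "\<dots> \<le> (2 / (real k * (1 - rhobar) * tau)) * (4 * theta * r\<^sup>2)"
      proof -
        have t2: "tau\<^sup>2 \<le> 1" using tle1 tpos by (simp add: power_le_one)
        have "(1 - rhobar)\<^sup>2 \<le> 1" using rb0 rb1 by (simp add: power_le_one)
        hence "1 / tau\<^sup>2 \<le> 1 / (tau\<^sup>2 * (1 - rhobar)\<^sup>2)"
          using tpos rb1 by (intro divide_left_mono) (auto intro: mult_left_le)
        moreover have "6 \<le> 6 / tau\<^sup>2" using t2 tpos by (simp add: field_simps)
        ultimately have "7 + 1 / tau\<^sup>2 \<le> 4 * theta" by (simp add: theta_def)
        thus ?thesis using kTpos by (intro mult_left_mono mult_right_mono) auto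
      qed
      finally show "epsu k + epsv k \<le> 8 * theta / (real k * (1 - rhobar) * tau) * (dist (z 0, w 0) p)\<^sup>2"
        by (simp add: r_def)
    qed
    thus ?thesis by (simp add: d0_def S_def mult.commute mult.left_commute)
  qed
  show "- adjoint C (xbar k) \<in> esubdiff (epsv k) g (vbar k) \<and>
           - adjoint M (ybar k) \<in> esubdiff (epsu k) f (ubar k) \<and>
           norm (M (ubar k) + C (vbar k) - d) \<le> 4 * d0 / (real k * (1 - rhobar) * tau) \<and>
           norm (xbar k - ybar k) \<le> 4 * d0 / (real k * (1 - rhobar) * tau) \<and>
           epsu k + epsv k \<le> 8 * d0\<^sup>2 * theta / (real k * (1 - rhobar) * tau)"
    using part1 part2 part3 part4 part5 by blast
qed

end
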